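(* Let $(X,\phi)$ be an acyclic convex geometry, let $A\subseteq X$ be a critical minimal generator of $b\in X$, and let $\Sigma$ be any unit implicational base of $(X,\phi)$. Then there exists an implication $C\to b\in\Sigma$ with $A\subseteq C$.
   Context: All sets are finite. A closure operator $\phi$ on $X$ is extensive, monotone and idempotent on $2^X$; closed sets are those with $\phi(C)=C$. $(X,\phi)$ is standard if $\phi(\emptyset)=\emptyset$ and $\phi(\{x\})\setminus\{x\}$ is closed for each $x$. A unit implicational base $\Sigma$ (set of implications $A\to b$, $A\subseteq X$, $b\in X$) is an implicational base of $(X,\phi)$ if its closed sets (sets $S$ such that for each $A\to b\in\Sigma$, $A\not\subseteq S$ or $b\in S$) are exactly the closed sets of $\phi$. $\Sigma$ is acyclic if the directed graph on $X$ with arcs $x\to y$ whenever some $A\to y\in\Sigma$ has $x\in A$ has no directed cycle; $\Sigma$ is irredundant if removing any implication changes the closed sets. An acyclic convex geometry is a standard closure space admitting an acyclic implicational base. $A$ is a minimal generator of $b$ if $b\in\phi(A)$ and $b\notin\phi(A\setminus\{x\})$ for all $x\in A$. An acyclic convex geometry admits a unique irredundant implicational base all of whose implications $A\to b$ have $A$ a minimal generator of $b$ (the critical base); a minimal generator $A$ of $b$ is critical if $A\to b$ is in the critical base. *)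

theory Defs
  imports Main
begin

definition closure_operator :: "'a set \<Rightarrow> ('a set \<Rightarrow> 'a set) \<Rightarrow> bool" where
  "closure_operator X phi \<longleftrightarrow>
     (\<forall>A. A \<subseteq> X \<longrightarrow> A \<subseteq> phi A \<and> phi A \<subseteq> X) \<and>
     (\<forall>A B. A \<subseteq> B \<and> B \<subseteq> X \<longrightarrow> phi A \<subseteq> phi B) \<and>
     (\<forall>A. A \<subseteq> X \<longrightarrow> phi (phi A) = phi A)"

definition closed_sets :: "'a set \<Rightarrow> ('a set \<Rightarrow> 'a set) \<Rightarrow> 'a set set" where
  "closed_sets X phi = {C. C \<subseteq> X \<and> phi C = C}"

definition standard :: "'a set \<Rightarrow> ('a set \<Rightarrow> 'a set) \<Rightarrow> bool" where
  "standard X phi \<longleftrightarrow> phi {} = {} \<and> (\<forall>x\<in>X. phi {x} - {x} \<in> closed_sets X phi)"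

text \<open>A unit implication A \<rightarrow> b is represented as the pair (A, b).\<close>
definition unit_implications :: "'a set \<Rightarrow> ('a set \<times> 'a) set \<Rightarrow> bool" where
  "unit_implications X \<Sigma> \<longleftrightarrow> (\<forall>(A, b)\<in>\<Sigma>. A \<subseteq> X \<and> b \<in> X)"

definition imp_closed_sets :: "'a set \<Rightarrow> ('a set \<times> 'a) set \<Rightarrow> 'a set set" where
  "imp_closed_sets X \<Sigma> = {S. S \<subseteq> X \<and> (\<forall>(A, b)\<in>\<Sigma>. \<not> A \<subseteq> S \<or> b \<in> S)}"

definition implicational_base :: "'a set \<Rightarrow> ('a set \<Rightarrow> 'a set) \<Rightarrow> ('a set \<times> 'a) set \<Rightarrow> bool" where
  "implicational_base X phi \<Sigma> \<longleftrightarrow>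
     unit_implications X \<Sigma> \<and> imp_closed_sets X \<Sigma> = closed_sets X phi"

definition dependency_graph :: "('a set \<times> 'a) set \<Rightarrow> ('a \<times> 'a) set" where
  "dependency_graph \<Sigma> = {(x, y). \<exists>A. (A, y) \<in> \<Sigma> \<and> x \<in> A}"

definition acyclic_base :: "('a set \<times> 'a) set \<Rightarrow> bool" where
  "acyclic_base \<Sigma> \<longleftrightarrow> acyclic (dependency_graph \<Sigma>)"

definition irredundant :: "'a set \<Rightarrow> ('a set \<times> 'a) set \<Rightarrow> bool" where
  "irredundant X \<Sigma> \<longleftrightarrow> (\<forall>i\<in>\<Sigma>. imp_closed_sets X (\<Sigma> - {i}) \<noteq> imp_closed_sets X \<Sigma>)"

definition acyclic_convex_geometry :: "'a set \<Rightarrow> ('a set \<Rightarrow> 'a set) \<Rightarrow> bool" where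
  "acyclic_convex_geometry X phi \<longleftrightarrow>
     finite X \<and> closure_operator X phi \<and> standard X phi \<and>
     (\<exists>\<Sigma>. implicational_base X phi \<Sigma> \<and> acyclic_base \<Sigma>)"

definition minimal_generator :: "'a set \<Rightarrow> ('a set \<Rightarrow> 'a set) \<Rightarrow> 'a set \<Rightarrow> 'a \<Rightarrow> bool" where
  "minimal_generator X phi A b \<longleftrightarrow>
     A \<subseteq> X \<and> b \<in> phi A \<and> (\<forall>x\<in>A. b \<notin> phi (A - {x}))"

text \<open>The critical base: an irredundant implicational base all of whose implications
  have a minimal generator as premise (unique for acyclic convex geometries).\<close>
definition critical_base :: "'a set \<Rightarrow> ('a set \<Rightarrow> 'a set) \<Rightarrow> ('a set \<times> 'a) set \<Rightarrow> bool" where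
  "critical_base X phi \<Sigma> \<longleftrightarrow>
     implicational_base X phi \<Sigma> \<and> irredundant X \<Sigma> \<and>
     (\<forall>(A, b)\<in>\<Sigma>. minimal_generator X phi A b)"

definition critical_generator :: "'a set \<Rightarrow> ('a set \<Rightarrow> 'a set) \<Rightarrow> 'a set \<Rightarrow> 'a \<Rightarrow> bool" where
  "critical_generator X phi A b \<longleftrightarrow>
     minimal_generator X phi A b \<and> (\<exists>\<Sigma>. critical_base X phi \<Sigma> \<and> (A, b) \<in> \<Sigma>)"

end

theory Submission
  imports Defs
begin

locale acg =
  fixes X :: "'a set" and phi :: "'a set \<Rightarrow> 'a set" and S1 :: "('a set \<times> 'a) set"
  assumes finX: "finite X" and clo: "closure_operator X phi"
    and base1: "implicational_base X phi S1" and acyc1: "acyclic_base S1"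
begin

lemma clo_all: "(\<forall>A. A \<subseteq> X \<longrightarrow> A \<subseteq> phi A \<and> phi A \<subseteq> X) \<and>
     (\<forall>A B. A \<subseteq> B \<and> B \<subseteq> X \<longrightarrow> phi A \<subseteq> phi B) \<and>
     (\<forall>A. A \<subseteq> X \<longrightarrow> phi (phi A) = phi A)"
  using clo unfolding closure_operator_def .

lemmas clo_parts = clo_all[THEN conjunct1] clo_all[THEN conjunct2, THEN conjunct1] clo_all[THEN conjunct2, THEN conjunct2]

lemma ext: "A \<subseteq> X \<Longrightarrow> A \<subseteq> phi A"
  using clo_parts(1) by simp
lemma sub: "A \<subseteq> X \<Longrightarrow> phi A \<subseteq> X"
  using clo_parts(1) by simp
lemma mono: "A \<subseteq> B \<Longrightarrow> B \<subseteq> X \<Longrightarrow> phi A \<subseteq> phi B"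
  using clo_parts(2) by simp
lemma idem: "A \<subseteq> X \<Longrightarrow> phi (phi A) = phi A"
  using clo_parts(3) by simp

lemma closed_iff:
  assumes "implicational_base X phi S'"
  shows "(Z \<subseteq> X \<and> phi Z = Z) \<longleftrightarrow> (Z \<subseteq> X \<and> (\<forall>(D, y)\<in>S'. \<not> D \<subseteq> Z \<or> y \<in> Z))"
proof -
  have "imp_closed_sets X S' = closed_sets X phi" using assms unfolding implicational_base_def by blast
  then have "Z \<in> imp_closed_sets X S' \<longleftrightarrow> Z \<in> closed_sets X phi" by simp
  then show ?thesis unfolding imp_closed_sets_def closed_sets_def by blast
qed

lemma cl_sat:
  assumes "implicational_base X phi S'" "Z \<subseteq> X" "phi Z = Z" "(D, y) \<in> S'" "D \<subseteq> Z"
  shows "y \<in> Z"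
proof -
  have "\<forall>(D, y)\<in>S'. \<not> D \<subseteq> Z \<or> y \<in> Z" using closed_iff[OF assms(1), of Z] assms(2,3) by blast
  then show ?thesis using assms(4,5) by fast
qed

lemma cl_intro:
  assumes "implicational_base X phi S'" "Z \<subseteq> X" "\<And>D y. (D, y) \<in> S' \<Longrightarrow> D \<subseteq> Z \<Longrightarrow> y \<in> Z"
  shows "phi Z = Z"
proof -
  have "\<forall>(D, y)\<in>S'. \<not> D \<subseteq> Z \<or> y \<in> Z" using assms(3) by fast
  then show ?thesis using closed_iff[OF assms(1), of Z] assms(2) by blast
qed

lemma cl_viol:
  assumes "implicational_base X phi S'" "Z \<subseteq> X" "phi Z \<noteq> Z"
  shows "\<exists>D y. (D, y) \<in> S' \<and> D \<subseteq> Z \<and> y \<notin> Z"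
proof (rule ccontr)
  assume "\<not> ?thesis"
  then have "\<And>D y. (D, y) \<in> S' \<Longrightarrow> D \<subseteq> Z \<Longrightarrow> y \<in> Z" by blast
  then have "phi Z = Z" using cl_intro[OF assms(1,2)] by blast
  then show False using assms(3) by blast
qed

lemma sat:
  assumes "implicational_base X phi S'" "(D, y) \<in> S'" "D \<subseteq> phi Y" "Y \<subseteq> X"
  shows "y \<in> phi Y"
proof -
  have "phi Y \<subseteq> X \<and> phi (phi Y) = phi Y" using sub idem assms(4) by blast
  then show ?thesis using closed_iff[OF assms(1), of "phi Y"] assms(2,3) by blast
qed

lemma closure_least: "Y \<subseteq> Z \<Longrightarrow> Z \<subseteq> X \<Longrightarrow> phi Z = Z \<Longrightarrow> phi Y \<subseteq> Z"
  using mono[of Y Z] by simp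

lemma F1:
  assumes B: "implicational_base X phi S'" and Y: "Y \<subseteq> X" and y: "y \<in> phi Y" "y \<notin> Y"
  shows "\<exists>D. (D, y) \<in> S' \<and> D \<subseteq> phi Y - {y}"
proof (rule ccontr)
  assume na: "\<not> ?thesis"
  let ?Z = "phi Y - {y}"
  have ZX: "?Z \<subseteq> X" using sub[OF Y] by blast
  have cl: "z \<in> ?Z" if Dz: "(D, z) \<in> S'" "D \<subseteq> ?Z" for D z
  proof -
    have "z \<in> phi Y" using sat[OF B Dz(1) _ Y] Dz(2) by blast
    moreover have "z \<noteq> y" using na Dz by blast
    ultimately show "z \<in> ?Z" by blast
  qed
  have "phi ?Z = ?Z" using cl_intro[OF B ZX] cl by blast
  moreover have "Y \<subseteq> ?Z" using ext[OF Y] y by blast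
  ultimately have "phi Y \<subseteq> ?Z" using closure_least ZX by blast
  then show False using y by blast
qed

definition R where "R = (dependency_graph S1)\<^sup>+"

lemma dep_sub: "dependency_graph S1 \<subseteq> X \<times> X"
  using base1 unfolding implicational_base_def unit_implications_def dependency_graph_def by fast

lemma wfR: "wf R"
proof -
  have "finite (dependency_graph S1)" using dep_sub finX by (meson finite_SigmaI finite_subset)
  moreover have "acyclic (dependency_graph S1)" using acyc1 unfolding acyclic_base_def .
  ultimately show ?thesis unfolding R_def by (simp add: finite_acyclic_wf wf_trancl)
qed

lemma R_irrefl: "(x, x) \<notin> R"
  using acyc1 unfolding acyclic_base_def acyclic_def R_def by blast

lemma R_trans: "(x, y) \<in> R \<Longrightarrow> (y, z) \<in> R \<Longrightarrow> (x, z) \<in> R"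
  unfolding R_def by (meson trancl_trans)

lemma R_asym: "(x, y) \<in> R \<Longrightarrow> (y, x) \<notin> R"
  using R_trans R_irrefl by blast

definition down where "down y = {x. x = y \<or> (x, y) \<in> R}"

lemma L1: "Y \<subseteq> X \<Longrightarrow> y \<in> phi Y \<Longrightarrow> y \<in> phi (Y \<inter> down y)"
proof (induction y rule: wf_induct[OF wfR])
  case (1 y)
  show ?case
  proof (cases "y \<in> Y")
    case True
    then have "y \<in> Y \<inter> down y" unfolding down_def by blast
    then show ?thesis using ext[of "Y \<inter> down y"] 1(2) by blast
  next
    case False
    obtain D where D: "(D, y) \<in> S1" "D \<subseteq> phi Y - {y}" using F1[OF base1 1(2,3) False] by blast
    have "D \<subseteq> phi (Y \<inter> down y)"
    proof
      fix d assume d: "d \<in> D"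
      then have dy: "(d, y) \<in> R" using D(1) unfolding R_def dependency_graph_def by blast
      have "d \<in> phi (Y \<inter> down d)" using 1(1) dy 1(2) D(2) d by blast
      moreover have "down d \<subseteq> down y" using dy R_trans unfolding down_def by blast
      ultimately show "d \<in> phi (Y \<inter> down y)" using mono[of "Y \<inter> down d" "Y \<inter> down y"] 1(2) by blast
    qed
    then show ?thesis using sat[OF base1 D(1)] 1(2) by blast
  qed
qed

lemma MG:
  assumes "minimal_generator X phi D y" "y \<notin> D"
  shows "\<forall>d\<in>D. (d, y) \<in> R"
proof
  fix d assume d: "d \<in> D"
  have DX: "D \<subseteq> X" and yD: "y \<in> phi D" and m: "\<forall>x\<in>D. y \<notin> phi (D - {x})"
    using assms(1) unfolding minimal_generator_def by auto
  have y1: "y \<in> phi (D \<inter> down y)" using L1[OF DX yD] .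
  show "(d, y) \<in> R"
  proof (rule ccontr)
    assume "(d, y) \<notin> R"
    then have "d \<notin> down y" using assms(2) d unfolding down_def by blast
    then have "D \<inter> down y \<subseteq> D - {d}" by blast
    then have "y \<in> phi (D - {d})" using mono[of "D \<inter> down y" "D - {d}"] DX y1 by blast
    then show False using m d by blast
  qed
qed

end

lemma trivial_not_irred:
  assumes "irredundant X S0" "(D, y) \<in> S0"
  shows "y \<notin> D"
proof
  assume yD: "y \<in> D"
  have "imp_closed_sets X (S0 - {(D, y)}) = imp_closed_sets X S0"
    unfolding imp_closed_sets_def using yD assms(2) by blast
  then show False using assms unfolding irredundant_def by blast
qed

theorem proposition4:
  fixes X :: "'a set" and phi :: "'a set \<Rightarrow> 'a set"
    and A :: "'a set" and b :: 'a and \<Sigma> :: "('a set \<times> 'a) set"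
  assumes "acyclic_convex_geometry X phi"
    and "b \<in> X"
    and "critical_generator X phi A b"
    and "implicational_base X phi \<Sigma>"
  shows "\<exists>C. (C, b) \<in> \<Sigma> \<and> A \<subseteq> C"
proof -
  obtain S1 where "implicational_base X phi S1" "acyclic_base S1"
    and finX: "finite X" and clo: "closure_operator X phi"
    using assms(1) unfolding acyclic_convex_geometry_def by blast
  then interpret acg X phi S1 by unfold_locales
  obtain S0 where S0: "critical_base X phi S0" "(A, b) \<in> S0" and mg: "minimal_generator X phi A b"
    using assms(3) unfolding critical_generator_def by blast
  have B0: "implicational_base X phi S0" and irr: "irredundant X S0"
    and mg0: "\<forall>(D, y)\<in>S0. minimal_generator X phi D y"
    using S0(1) unfolding critical_base_def by auto
  have AX: "A \<subseteq> X" and bA: "b \<in> phi A" and mA: "\<forall>x\<in>A. b \<notin> phi (A - {x})"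
    using mg unfolding minimal_generator_def by auto
  have bnA: "b \<notin> A" using trivial_not_irred[OF irr S0(2)] .
  define F where "F = phi A"
  have FX: "F \<subseteq> X" and FF: "phi F = F" and AF: "A \<subseteq> F" and bF: "b \<in> F"
    using sub[OF AX] idem[OF AX] ext[OF AX] bA unfolding F_def by auto
  define I where "I = S0 - {(A, b)}"
  have neq: "imp_closed_sets X I \<noteq> imp_closed_sets X S0"
    using irr S0(2) unfolding irredundant_def I_def by blast
  have "imp_closed_sets X S0 \<subseteq> imp_closed_sets X I"
    unfolding imp_closed_sets_def I_def by blast
  then obtain T where T: "T \<in> imp_closed_sets X I" "T \<notin> imp_closed_sets X S0"
    using neq by blast
  have TX: "T \<subseteq> X" and TI: "\<forall>(D, y)\<in>I. \<not> D \<subseteq> T \<or> y \<in> T"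
    using T(1) unfolding imp_closed_sets_def by auto
  obtain D0 y0 where D0: "(D0, y0) \<in> S0" "D0 \<subseteq> T" "y0 \<notin> T"
    using T(2) TX unfolding imp_closed_sets_def by blast
  have "(D0, y0) \<notin> I" using D0 TI by blast
  then have "(D0, y0) = (A, b)" using D0(1) unfolding I_def by blast
  then have AT: "A \<subseteq> T" and bT: "b \<notin> T" using D0 by auto
  have L2: "\<forall>g. g \<in> F \<and> (b, g) \<notin> R \<and> g \<noteq> b \<longrightarrow> g \<in> T"
  proof -
    have "g \<in> F \<and> (b, g) \<notin> R \<and> g \<noteq> b \<longrightarrow> g \<in> T" for g
    proof (induction g rule: wf_induct[OF wfR])
      case (1 g)
      show ?case
      proof (intro impI)
        assume g: "g \<in> F \<and> (b, g) \<notin> R \<and> g \<noteq> b"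
        show "g \<in> T"
        proof (cases "g \<in> A")
          case True then show ?thesis using AT by blast
        next
          case False
          obtain D where D: "(D, g) \<in> S0" "D \<subseteq> phi A - {g}"
            using F1[OF B0 AX _ False] g unfolding F_def by blast
          have gD: "g \<notin> D" using trivial_not_irred[OF irr D(1)] .
          have mD: "minimal_generator X phi D g" using mg0 D(1) by blast
          have Dl: "\<forall>d\<in>D. (d, g) \<in> R" using MG[OF mD gD] .
          have "D \<subseteq> T"
          proof
            fix d assume d: "d \<in> D"
            have dg: "(d, g) \<in> R" using Dl d by blast
            have "d \<noteq> b" using dg g by blast
            moreover have "(b, d) \<notin> R" using dg g R_trans by blast
            moreover have "d \<in> F" using D(2) d unfolding F_def by blast
            ultimately show "d \<in> T" using 1 dg by blast
          qed
          moreover have "(D, g) \<in> I" using D(1) g unfolding I_def by blast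
          ultimately show ?thesis using TI by fast
        qed
      qed
    qed
    then show ?thesis by blast
  qed
  have P1: "phi (F - {a}) = F - {a}" if aA: "a \<in> A" for a
  proof -
    have FaX: "F - {a} \<subseteq> X" using FX by blast
    have sub1: "phi (F - {a}) \<subseteq> F" using mono[OF _ FX, of "F - {a}"] FF by blast
    have "a \<notin> phi (F - {a})"
    proof
      assume a1: "a \<in> phi (F - {a})"
      have a2: "a \<in> phi ((F - {a}) \<inter> down a)" using L1[OF FaX a1] .
      have "(F - {a}) \<inter> down a \<subseteq> phi (A - {a})"
      proof
        fix g assume g: "g \<in> (F - {a}) \<inter> down a"
        then have ga: "(g, a) \<in> R" unfolding down_def by blast
        have "g \<in> phi (A \<inter> down g)" using L1[OF AX] g unfolding F_def by blast
        moreover have "a \<notin> down g" using ga R_asym R_irrefl unfolding down_def by blast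
        then have "A \<inter> down g \<subseteq> A - {a}" by blast
        ultimately show "g \<in> phi (A - {a})" using mono[of "A \<inter> down g" "A - {a}"] AX by blast
      qed
      then have "phi ((F - {a}) \<inter> down a) \<subseteq> phi (phi (A - {a}))"
        using mono sub[of "A - {a}"] AX by blast
      then have "a \<in> phi (A - {a})" using a2 idem[of "A - {a}"] AX by blast
      then have "A \<subseteq> phi (A - {a})" using ext[of "A - {a}"] AX by blast
      then have "phi A \<subseteq> phi (A - {a})"
        using mono[of A "phi (A - {a})"] sub[of "A - {a}"] idem[of "A - {a}"] AX by auto
      then show False using bA mA aA by blast
    qed
    then show ?thesis using sub1 ext[OF FaX] by blast
  qed
  have P2: "phi (F - {a, b}) = F - {a, b}" if aA: "a \<in> A" for a
  proof -
    have ZX: "F - {a, b} \<subseteq> X" using FX by blast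
    have s1: "phi (F - {a, b}) \<subseteq> F - {a}" using mono[of "F - {a, b}" "F - {a}"] FX P1[OF aA] by blast
    have "b \<notin> phi (F - {a, b})"
    proof
      assume b1: "b \<in> phi (F - {a, b})"
      define G where "G = (F - {a, b}) \<inter> down b"
      have bG: "b \<in> phi G" using L1[OF ZX b1] unfolding G_def .
      define M where "M = T \<inter> (F - {a})"
      have MX: "M \<subseteq> X" using TX unfolding M_def by blast
      have GM: "G \<subseteq> M"
      proof
        fix g assume g: "g \<in> G"
        then have "(g, b) \<in> R" "g \<in> F" "g \<noteq> b" "g \<noteq> a" unfolding G_def down_def by auto
        then show "g \<in> M" using L2 R_asym unfolding M_def by blast
      qed
      have FaX: "F - {a} \<subseteq> X" using FX by blast
      have clM: "y \<in> M" if Dy: "(D, y) \<in> S0" "D \<subseteq> M" for D y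
      proof -
        show "y \<in> M"
        proof (cases "(D, y) = (A, b)")
          case True
          then have "a \<in> M" using Dy aA by blast
          then show ?thesis unfolding M_def by blast
        next
          case False
          then have "(D, y) \<in> I" using Dy unfolding I_def by blast
          moreover have "D \<subseteq> T" using Dy unfolding M_def by blast
          ultimately have "y \<in> T" using TI by fast
          moreover have "y \<in> F - {a}" using cl_sat[OF B0 FaX P1[OF aA] Dy(1)] Dy(2) unfolding M_def by blast
          ultimately show ?thesis unfolding M_def by blast
        qed
      qed
      have "phi M = M" using cl_intro[OF B0 MX] clM by blast
      then have "phi G \<subseteq> M" using closure_least GM MX by blast
      then show False using bG bT unfolding M_def by blast
    qed
    then show ?thesis using s1 ext[OF ZX] by blast
  qed
  define S where "S = F - {b}"
  have SX: "S \<subseteq> X" using FX unfolding S_def by blast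
  have "phi A \<subseteq> phi S" using mono[of A S] AF bnA SX unfolding S_def by blast
  then have "phi S \<noteq> S" using bA unfolding S_def by blast
  then obtain C y where Cy: "(C, y) \<in> \<Sigma>" "C \<subseteq> S" "y \<notin> S"
    using cl_viol[OF assms(4) SX] by blast
  have "y \<in> F" using cl_sat[OF assms(4) FX FF Cy(1)] Cy(2) unfolding S_def by blast
  then have yb: "y = b" using Cy unfolding S_def by blast
  have "A \<subseteq> C"
  proof
    fix a assume aA: "a \<in> A"
    show "a \<in> C"
    proof (rule ccontr)
      assume "a \<notin> C"
      then have "C \<subseteq> F - {a, b}" using Cy unfolding S_def by blast
      moreover have "F - {a, b} \<subseteq> X" using FX by blast
      ultimately have "y \<in> F - {a, b}" using cl_sat[OF assms(4) _ P2[OF aA] Cy(1)] by blast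
      then show False using yb by blast
    qed
  qed
  then show ?thesis using Cy yb by blast
qed

end
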